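(* Under the identification $\Lambda_k=\lambda_k$ ($k=1,\dots,N-1$), the stationarity (necessary optimality) conditions of $\tilde{\mathcal J}^{\mathrm{dir},2}_d$ with respect to $(q_0,\dots,q_N,U_d^{(1)},U_d^{(2)},\Lambda_1,\dots,\Lambda_{N-1},\mu,\nu)$ and those of $\tilde{\mathcal J}^{\mathcal E}_d$ with respect to $(y_0,\dots,y_N,U_d^{(1)},U_d^{(2)},\mu,\nu)$ are equivalent.
   Context: Setting: $\mathcal Q=\mathbb R^n$, $y_k=(q_k,\lambda_k)$, controls in $\mathbb R^m$; smooth $f(q,v)\in\mathbb R^n$, $\rho(q)\in\mathbb R^{n\times m}$, $\mathrm g(q)\in\mathbb R^{m\times m}$ symmetric positive definite, terminal cost $\phi(q,v)$; $q^0,\dot q^0\in\mathbb R^n$, $h=T/N$; parameters $\alpha,\gamma\in[0,1]$. Notation: $\bar q_k^\gamma=\gamma q_k+(1-\gamma)q_{k+1}$, $\bar\lambda_k^\gamma$ likewise, $\Delta q_k=(q_{k+1}-q_k)/h$, $\Delta\lambda_k$ likewise, $f_k^\gamma=f(\bar q_k^\gamma,\Delta q_k)$, $\rho_k^\gamma=\rho(\bar q_k^\gamma)$, $\mathrm g_k^\gamma=\mathrm g(\bar q_k^\gamma)$, and $F_k^{(1)}=f_k^\gamma+\rho_k^\gamma U_k^{(1)}$, $F_k^{(2)}=f_k^{1-\gamma}+\rho_k^{1-\gamma}U_k^{(2)}$. Approximate control-dependent discrete Lagrangian: $\tilde L^{\mathcal E}_d(y_k,y_{k+1},U_k^{(1)},U_k^{(2)},h)=h\big[\alpha\big(\Delta\lambda_k^\top\Delta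 q_k+(\bar\lambda_k^\gamma)^\top F_k^{(1)}-\frac12U_k^{(1)\top}\mathrm g_k^\gamma U_k^{(1)}\big)+(1-\alpha)\big(\Delta\lambda_k^\top\Delta q_k+(\bar\lambda_k^{1-\gamma})^\top F_k^{(2)}-\frac12U_k^{(2)\top}\mathrm g_k^{1-\gamma}U_k^{(2)}\big)\big]$. Boundary velocities: $v_0^-=\Delta q_0-h\alpha\gamma F_0^{(1)}-h(1-\alpha)(1-\gamma)F_0^{(2)}$ and $v_N^+=\Delta q_{N-1}+h\alpha(1-\gamma)F_{N-1}^{(1)}+h(1-\alpha)\gamma F_{N-1}^{(2)}$. Approximate control-dependent objective: $\tilde{\mathcal J}^{\mathcal E}_d=\phi(q_N,v_N^+)+\mu^\top(q_0-q^0)+\nu^\top(v_0^--\dot q^0)+\lambda_N^\top v_N^+-\lambda_0^\top v_0^--\sum_{k=0}^{N-1}\tilde L^{\mathcal E}_d(y_k,y_{k+1},U_k^{(1)},U_k^{(2)},h)$. Direct second-order objective, with multipliers $\Lambda_1,\dots,\Lambda_{N-1}\in\mathbb R^n$: $\tilde{\mathcal J}^{\mathrm{dir},2}_d=\phi(q_N,v_N^+)+\mu^\top(q_0-q^0)+\nu^\top(v_0^--\dot q^0)+\frac h2\sum_{k=0}^{N-1}\big(\alpha U_k^{(1)\top}\mathrm g_k^\gamma U_k^{(1)}+(1-\alpha)U_k^{(2)\top}\mathrm g_k^{1-\gamma}U_k^{(2)}\big)+h\sum_{k=1}^{N-1}\Lambda_k^\top\Big\{\frac{q_{k+1}-2q_k+q_{k-1}}{h^2}-\alpha\big[\gamma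 F_k^{(1)}+(1-\gamma)F_{k-1}^{(1)}\big]-(1-\alpha)\big[(1-\gamma)F_k^{(2)}+\gamma F_{k-1}^{(2)}\big]\Big\}$. *)

theory Defs
  imports "HOL-Analysis.Analysis"
begin

text \<open>A matrix rho(q) in R^(n x m) is real^'m^'n (rows indexed by 'n), so rho(q) *v U in R^n.
  Discrete trajectories are sequences indexed by nat; only the indices 0..N
  (states/costates) and 0..N-1 (controls) are used.\<close>

definition avg :: "real \<Rightarrow> (nat \<Rightarrow> 'a::real_vector) \<Rightarrow> nat \<Rightarrow> 'a" where
  "avg c x k = c *\<^sub>R x k + (1 - c) *\<^sub>R x (Suc k)"

definition dif :: "real \<Rightarrow> (nat \<Rightarrow> 'a::real_vector) \<Rightarrow> nat \<Rightarrow> 'a" where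
  "dif h x k = (1 / h) *\<^sub>R (x (Suc k) - x k)"

text \<open>F_k^(1) (c = gamma, control U^(1)) and F_k^(2) (c = 1 - gamma, control U^(2)).\<close>
definition Fk :: "(real^'n \<Rightarrow> real^'n \<Rightarrow> real^'n) \<Rightarrow> (real^'n \<Rightarrow> real^'m^'n)
    \<Rightarrow> real \<Rightarrow> real \<Rightarrow> (nat \<Rightarrow> real^'n) \<Rightarrow> (nat \<Rightarrow> real^'m) \<Rightarrow> nat \<Rightarrow> real^'n" where
  "Fk f \<rho> c h q U k = f (avg c q k) (dif h q k) + \<rho> (avg c q k) *v U k"

definition quadg :: "(real^'n \<Rightarrow> real^'m^'m) \<Rightarrow> real \<Rightarrow> (nat \<Rightarrow> real^'n) \<Rightarrow> (nat \<Rightarrow> real^'m) \<Rightarrow> nat \<Rightarrow> real" where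
  "quadg g c q U k = U k \<bullet> (g (avg c q k) *v U k)"

definition LdE where
  "LdE f \<rho> g \<alpha> \<gamma> h q lam U1 U2 k =
     h * (\<alpha> * (dif h lam k \<bullet> dif h q k + avg \<gamma> lam k \<bullet> Fk f \<rho> \<gamma> h q U1 k
                  - 1/2 * quadg g \<gamma> q U1 k)
        + (1 - \<alpha>) * (dif h lam k \<bullet> dif h q k + avg (1 - \<gamma>) lam k \<bullet> Fk f \<rho> (1 - \<gamma>) h q U2 k
                  - 1/2 * quadg g (1 - \<gamma>) q U2 k))"

definition v0minus where
  "v0minus f \<rho> \<alpha> \<gamma> h q U1 U2 =
     dif h q 0 - (h * \<alpha> * \<gamma>) *\<^sub>R Fk f \<rho> \<gamma> h q U1 0
               - (h * (1 - \<alpha>) * (1 - \<gamma>)) *\<^sub>R Fk f \<rho> (1 - \<gamma>) h q U2 0"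

definition vNplus where
  "vNplus f \<rho> \<alpha> \<gamma> h N q U1 U2 =
     dif h q (N - 1) + (h * \<alpha> * (1 - \<gamma>)) *\<^sub>R Fk f \<rho> \<gamma> h q U1 (N - 1)
               + (h * (1 - \<alpha>) * \<gamma>) *\<^sub>R Fk f \<rho> (1 - \<gamma>) h q U2 (N - 1)"

definition JE where
  "JE f \<rho> g \<phi> q0 qd0 T N \<alpha> \<gamma> q lam U1 U2 \<mu> \<nu> =
     (let h = T / real N;
          vN = vNplus f \<rho> \<alpha> \<gamma> h N q U1 U2;
          v0 = v0minus f \<rho> \<alpha> \<gamma> h q U1 U2
      in \<phi> (q N) vN + \<mu> \<bullet> (q 0 - q0) + \<nu> \<bullet> (v0 - qd0) + lam N \<bullet> vN - lam 0 \<bullet> v0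
         - (\<Sum>k<N. LdE f \<rho> g \<alpha> \<gamma> h q lam U1 U2 k))"

definition Jdir where
  "Jdir f \<rho> g \<phi> q0 qd0 T N \<alpha> \<gamma> q U1 U2 Lam \<mu> \<nu> =
     (let h = T / real N;
          vN = vNplus f \<rho> \<alpha> \<gamma> h N q U1 U2;
          v0 = v0minus f \<rho> \<alpha> \<gamma> h q U1 U2
      in \<phi> (q N) vN + \<mu> \<bullet> (q 0 - q0) + \<nu> \<bullet> (v0 - qd0)
         + h / 2 * (\<Sum>k<N. \<alpha> * quadg g \<gamma> q U1 k + (1 - \<alpha>) * quadg g (1 - \<gamma>) q U2 k)
         + h * (\<Sum>k\<in>{1..N-1}. Lam k \<bullet>
              ((1 / h\<^sup>2) *\<^sub>R (q (Suc k) - 2 *\<^sub>R q k + q (k - 1))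
               - \<alpha> *\<^sub>R (\<gamma> *\<^sub>R Fk f \<rho> \<gamma> h q U1 k + (1 - \<gamma>) *\<^sub>R Fk f \<rho> \<gamma> h q U1 (k - 1))
               - (1 - \<alpha>) *\<^sub>R ((1 - \<gamma>) *\<^sub>R Fk f \<rho> (1 - \<gamma>) h q U2 k
                               + \<gamma> *\<^sub>R Fk f \<rho> (1 - \<gamma>) h q U2 (k - 1)))))"

definition stat_block :: "((nat \<Rightarrow> 'a::real_normed_vector) \<Rightarrow> real) \<Rightarrow> (nat \<Rightarrow> 'a) \<Rightarrow> nat \<Rightarrow> bool" where
  "stat_block F x k \<longleftrightarrow> ((\<lambda>w. F (x(k := w))) has_derivative (\<lambda>_. 0)) (at (x k))"

definition stat_var :: "('a::real_normed_vector \<Rightarrow> real) \<Rightarrow> 'a \<Rightarrow> bool" where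
  "stat_var F x \<longleftrightarrow> (F has_derivative (\<lambda>_. 0)) (at x)"

definition dir_stationary where
  "dir_stationary f \<rho> g \<phi> q0 qd0 T N \<alpha> \<gamma> q U1 U2 Lam \<mu> \<nu> \<longleftrightarrow>
     (\<forall>k\<le>N. stat_block (\<lambda>q'. Jdir f \<rho> g \<phi> q0 qd0 T N \<alpha> \<gamma> q' U1 U2 Lam \<mu> \<nu>) q k) \<and>
     (\<forall>k<N. stat_block (\<lambda>U'. Jdir f \<rho> g \<phi> q0 qd0 T N \<alpha> \<gamma> q U' U2 Lam \<mu> \<nu>) U1 k) \<and>
     (\<forall>k<N. stat_block (\<lambda>U'. Jdir f \<rho> g \<phi> q0 qd0 T N \<alpha> \<gamma> q U1 U' Lam \<mu> \<nu>) U2 k) \<and>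
     (\<forall>k\<in>{1..N-1}. stat_block (\<lambda>L'. Jdir f \<rho> g \<phi> q0 qd0 T N \<alpha> \<gamma> q U1 U2 L' \<mu> \<nu>) Lam k) \<and>
     stat_var (\<lambda>m. Jdir f \<rho> g \<phi> q0 qd0 T N \<alpha> \<gamma> q U1 U2 Lam m \<nu>) \<mu> \<and>
     stat_var (\<lambda>n. Jdir f \<rho> g \<phi> q0 qd0 T N \<alpha> \<gamma> q U1 U2 Lam \<mu> n) \<nu>"

text \<open>Stationarity conditions of \<open>J~_d^E\<close> w.r.t.
  (y_0..y_N = (q_k, \<lambda>_k), U^(1)_0..U^(1)_(N-1), U^(2)_0..U^(2)_(N-1), \<mu>, \<nu>).\<close>
definition E_stationary where
  "E_stationary f \<rho> g \<phi> q0 qd0 T N \<alpha> \<gamma> q lam U1 U2 \<mu> \<nu> \<longleftrightarrow>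
     (\<forall>k\<le>N. stat_block (\<lambda>q'. JE f \<rho> g \<phi> q0 qd0 T N \<alpha> \<gamma> q' lam U1 U2 \<mu> \<nu>) q k) \<and>
     (\<forall>k\<le>N. stat_block (\<lambda>l'. JE f \<rho> g \<phi> q0 qd0 T N \<alpha> \<gamma> q l' U1 U2 \<mu> \<nu>) lam k) \<and>
     (\<forall>k<N. stat_block (\<lambda>U'. JE f \<rho> g \<phi> q0 qd0 T N \<alpha> \<gamma> q lam U' U2 \<mu> \<nu>) U1 k) \<and>
     (\<forall>k<N. stat_block (\<lambda>U'. JE f \<rho> g \<phi> q0 qd0 T N \<alpha> \<gamma> q lam U1 U' \<mu> \<nu>) U2 k) \<and>
     stat_var (\<lambda>m. JE f \<rho> g \<phi> q0 qd0 T N \<alpha> \<gamma> q lam U1 U2 m \<nu>) \<mu> \<and>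
     stat_var (\<lambda>n. JE f \<rho> g \<phi> q0 qd0 T N \<alpha> \<gamma> q lam U1 U2 \<mu> n) \<nu>"

end

theory Submission
  imports Defs
begin

lemma partA:
  fixes lam A :: "nat \<Rightarrow> 'a::real_inner"
  shows "lam (Suc M) \<bullet> ((1-c) *\<^sub>R A M) + lam 0 \<bullet> (c *\<^sub>R A 0) - (\<Sum>k<Suc M. avg c lam k \<bullet> A k)
       = - (\<Sum>k\<in>{1..M}. lam k \<bullet> (c *\<^sub>R A k + (1-c) *\<^sub>R A (k-1)))"
proof (induction M)
  case 0 thus ?case by (simp add: avg_def inner_add_left inner_add_right)
next
  case (Suc M)
  have e: "(\<Sum>k\<in>{1..Suc M}. lam k \<bullet> (c *\<^sub>R A k + (1-c) *\<^sub>R A (k-1)))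
     = (\<Sum>k\<in>{1..M}. lam k \<bullet> (c *\<^sub>R A k + (1-c) *\<^sub>R A (k-1))) + lam (Suc M) \<bullet> (c *\<^sub>R A (Suc M) + (1-c) *\<^sub>R A M)"
    by (simp add: sum.atLeast_Suc_atMost_Suc_shift)
  show ?case using Suc.IH unfolding e
    by (simp add: avg_def inner_add_left inner_add_right algebra_simps)
qed

lemma partD:
  fixes lam D :: "nat \<Rightarrow> 'a::real_inner"
  shows "lam (Suc M) \<bullet> D M - lam 0 \<bullet> D 0 - (\<Sum>k<Suc M. (lam (Suc k) - lam k) \<bullet> D k)
       = (\<Sum>k\<in>{1..M}. lam k \<bullet> (D k - D (k-1)))"
proof (induction M)
  case 0 thus ?case by (simp add: inner_diff_left)
next
  case (Suc M)
  have e: "(\<Sum>k\<in>{1..Suc M}. lam k \<bullet> (D k - D (k-1)))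
     = (\<Sum>k\<in>{1..M}. lam k \<bullet> (D k - D (k-1))) + lam (Suc M) \<bullet> (D (Suc M) - D M)"
    by simp
  show ?case using Suc.IH unfolding e
    by (simp add: inner_diff_left inner_diff_right algebra_simps)
qed


lemma JE_Jdir:
  assumes hne: "T / real N \<noteq> 0" and N1: "N \<ge> 1"
    and LL: "\<And>k. 1 \<le> k \<Longrightarrow> k \<le> N - 1 \<Longrightarrow> lam k = Lam k"
  shows "JE f \<rho> g \<phi> q0 qd0 T N \<alpha> \<gamma> q lam U1 U2 \<mu> \<nu> = Jdir f \<rho> g \<phi> q0 qd0 T N \<alpha> \<gamma> q U1 U2 Lam \<mu> \<nu>"
proof -
  define h where "h = T / real N"
  have h0: "h \<noteq> 0" using hne h_def by simp
  obtain M where M: "N = Suc M" using N1 by (cases N) auto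
  define A where "A = Fk f \<rho> \<gamma> h q U1"
  define B where "B = Fk f \<rho> (1-\<gamma>) h q U2"
  define D where "D = dif h q"
  define Qa where "Qa = quadg g \<gamma> q U1"
  define Qb where "Qb = quadg g (1-\<gamma>) q U2"
  have L: "LdE f \<rho> g \<alpha> \<gamma> h q lam U1 U2 k =
     (lam (Suc k) - lam k) \<bullet> D k + (h*\<alpha>) * (avg \<gamma> lam k \<bullet> A k) + (h*(1-\<alpha>)) * (avg (1-\<gamma>) lam k \<bullet> B k)
     - h/2 * (\<alpha> * Qa k + (1-\<alpha>) * Qb k)" for k
    using h0 unfolding LdE_def A_def[symmetric] B_def[symmetric] D_def[symmetric] Qa_def[symmetric] Qb_def[symmetric]
    by (simp add: dif_def inner_diff_left field_simps)
  have sL: "(\<Sum>k<N. LdE f \<rho> g \<alpha> \<gamma> h q lam U1 U2 k) =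
     (\<Sum>k<N. (lam (Suc k) - lam k) \<bullet> D k) + (h*\<alpha>) * (\<Sum>k<N. avg \<gamma> lam k \<bullet> A k)
     + (h*(1-\<alpha>)) * (\<Sum>k<N. avg (1-\<gamma>) lam k \<bullet> B k)
     - h/2 * (\<Sum>k<N. \<alpha> * Qa k + (1-\<alpha>) * Qb k)"
    unfolding L by (simp add: sum.distrib sum_subtractf sum_distrib_left sum_divide_distrib[symmetric] flip: sum.distrib)
  have R: "Lam k \<bullet> ((1 / h\<^sup>2) *\<^sub>R (q (Suc k) - 2 *\<^sub>R q k + q (k - 1))
               - \<alpha> *\<^sub>R (\<gamma> *\<^sub>R A k + (1 - \<gamma>) *\<^sub>R A (k - 1))
               - (1 - \<alpha>) *\<^sub>R ((1 - \<gamma>) *\<^sub>R B k + \<gamma> *\<^sub>R B (k - 1)))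
     = (1/h) * (lam k \<bullet> (D k - D (k-1))) - \<alpha> * (lam k \<bullet> (\<gamma> *\<^sub>R A k + (1 - \<gamma>) *\<^sub>R A (k - 1)))
       - (1-\<alpha>) * (lam k \<bullet> ((1 - \<gamma>) *\<^sub>R B k + (1 - (1 - \<gamma>)) *\<^sub>R B (k - 1)))"
    if "k \<in> {1..N-1}" for k
  proof -
    have k: "Suc (k-1) = k" "lam k = Lam k" using that LL by auto
    have "(1 / h\<^sup>2) *\<^sub>R (q (Suc k) - 2 *\<^sub>R q k + q (k - 1)) = (1/h) *\<^sub>R (D k - D (k-1))"
      using h0 unfolding D_def dif_def k(1)
      by (simp add: power2_eq_square algebra_simps scaleR_2)
    then show ?thesis unfolding k(2)[symmetric] by (simp add: inner_diff_right inner_add_right)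
  qed
  have sR: "(\<Sum>k\<in>{1..N-1}. Lam k \<bullet> ((1 / h\<^sup>2) *\<^sub>R (q (Suc k) - 2 *\<^sub>R q k + q (k - 1))
               - \<alpha> *\<^sub>R (\<gamma> *\<^sub>R A k + (1 - \<gamma>) *\<^sub>R A (k - 1))
               - (1 - \<alpha>) *\<^sub>R ((1 - \<gamma>) *\<^sub>R B k + \<gamma> *\<^sub>R B (k - 1))))
     = (1/h) * (\<Sum>k\<in>{1..N-1}. lam k \<bullet> (D k - D (k-1)))
       - \<alpha> * (\<Sum>k\<in>{1..N-1}. lam k \<bullet> (\<gamma> *\<^sub>R A k + (1 - \<gamma>) *\<^sub>R A (k - 1)))
       - (1-\<alpha>) * (\<Sum>k\<in>{1..N-1}. lam k \<bullet> ((1 - \<gamma>) *\<^sub>R B k + (1 - (1 - \<gamma>)) *\<^sub>R B (k - 1)))"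
    (is "?l = ?r")
  proof -
    have "?l = (\<Sum>k\<in>{1..N-1}. (1/h) * (lam k \<bullet> (D k - D (k-1))) - \<alpha> * (lam k \<bullet> (\<gamma> *\<^sub>R A k + (1 - \<gamma>) *\<^sub>R A (k - 1)))
       - (1-\<alpha>) * (lam k \<bullet> ((1 - \<gamma>) *\<^sub>R B k + (1 - (1 - \<gamma>)) *\<^sub>R B (k - 1))))"
      by (rule sum.cong[OF refl R])
    also have "\<dots> = ?r" by (simp only: sum_subtractf sum_distrib_left)
    finally show ?thesis .
  qed
  have pA: "lam N \<bullet> ((1-\<gamma>) *\<^sub>R A M) + lam 0 \<bullet> (\<gamma> *\<^sub>R A 0) - (\<Sum>k<N. avg \<gamma> lam k \<bullet> A k)
       = - (\<Sum>k\<in>{1..N-1}. lam k \<bullet> (\<gamma> *\<^sub>R A k + (1-\<gamma>) *\<^sub>R A (k-1)))"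
    using partA[of lam M \<gamma> A] M by simp
  have pB: "lam N \<bullet> ((1-(1-\<gamma>)) *\<^sub>R B M) + lam 0 \<bullet> ((1-\<gamma>) *\<^sub>R B 0) - (\<Sum>k<N. avg (1-\<gamma>) lam k \<bullet> B k)
       = - (\<Sum>k\<in>{1..N-1}. lam k \<bullet> ((1-\<gamma>) *\<^sub>R B k + (1-(1-\<gamma>)) *\<^sub>R B (k-1)))"
    using partA[of lam M "1-\<gamma>" B] M by simp
  have pD: "lam N \<bullet> D M - lam 0 \<bullet> D 0 - (\<Sum>k<N. (lam (Suc k) - lam k) \<bullet> D k)
       = (\<Sum>k\<in>{1..N-1}. lam k \<bullet> (D k - D (k-1)))"
    using partD[of lam M D] M by simp
  have vN: "vNplus f \<rho> \<alpha> \<gamma> h N q U1 U2 = D M + (h * \<alpha> * (1 - \<gamma>)) *\<^sub>R A M + (h * (1 - \<alpha>) * \<gamma>) *\<^sub>R B M"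
    unfolding vNplus_def A_def B_def D_def M by simp
  have v0: "v0minus f \<rho> \<alpha> \<gamma> h q U1 U2 = D 0 - (h * \<alpha> * \<gamma>) *\<^sub>R A 0 - (h * (1 - \<alpha>) * (1 - \<gamma>)) *\<^sub>R B 0"
    unfolding v0minus_def A_def B_def D_def by simp
  have key: "lam N \<bullet> vNplus f \<rho> \<alpha> \<gamma> h N q U1 U2 - lam 0 \<bullet> v0minus f \<rho> \<alpha> \<gamma> h q U1 U2
       - (\<Sum>k<N. LdE f \<rho> g \<alpha> \<gamma> h q lam U1 U2 k)
     = h / 2 * (\<Sum>k<N. \<alpha> * Qa k + (1 - \<alpha>) * Qb k)
       + h * (\<Sum>k\<in>{1..N-1}. Lam k \<bullet> ((1 / h\<^sup>2) *\<^sub>R (q (Suc k) - 2 *\<^sub>R q k + q (k - 1))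
               - \<alpha> *\<^sub>R (\<gamma> *\<^sub>R A k + (1 - \<gamma>) *\<^sub>R A (k - 1))
               - (1 - \<alpha>) *\<^sub>R ((1 - \<gamma>) *\<^sub>R B k + \<gamma> *\<^sub>R B (k - 1))))"
  proof -
    have e1: "lam N \<bullet> vNplus f \<rho> \<alpha> \<gamma> h N q U1 U2 - lam 0 \<bullet> v0minus f \<rho> \<alpha> \<gamma> h q U1 U2
       - (\<Sum>k<N. LdE f \<rho> g \<alpha> \<gamma> h q lam U1 U2 k)
      = (lam N \<bullet> D M - lam 0 \<bullet> D 0 - (\<Sum>k<N. (lam (Suc k) - lam k) \<bullet> D k))
        + (h*\<alpha>) * (lam N \<bullet> ((1-\<gamma>) *\<^sub>R A M) + lam 0 \<bullet> (\<gamma> *\<^sub>R A 0) - (\<Sum>k<N. avg \<gamma> lam k \<bullet> A k))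
        + (h*(1-\<alpha>)) * (lam N \<bullet> ((1-(1-\<gamma>)) *\<^sub>R B M) + lam 0 \<bullet> ((1-\<gamma>) *\<^sub>R B 0) - (\<Sum>k<N. avg (1-\<gamma>) lam k \<bullet> B k))
        + h/2 * (\<Sum>k<N. \<alpha> * Qa k + (1-\<alpha>) * Qb k)"
      unfolding sL vN v0 by (simp add: inner_add_right inner_diff_right algebra_simps)
    show ?thesis unfolding e1 pA pB pD sR using h0 by (simp add: algebra_simps)
  qed
  let ?vN = "vNplus f \<rho> \<alpha> \<gamma> h N q U1 U2"
  let ?v0 = "v0minus f \<rho> \<alpha> \<gamma> h q U1 U2"
  let ?C = "\<phi> (q N) ?vN + \<mu> \<bullet> (q 0 - q0) + \<nu> \<bullet> (?v0 - qd0)"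
  have "JE f \<rho> g \<phi> q0 qd0 T N \<alpha> \<gamma> q lam U1 U2 \<mu> \<nu> = ?C + (lam N \<bullet> ?vN - lam 0 \<bullet> ?v0
       - (\<Sum>k<N. LdE f \<rho> g \<alpha> \<gamma> h q lam U1 U2 k))"
    unfolding JE_def Let_def h_def[symmetric] by simp
  also have "\<dots> = ?C + (h / 2 * (\<Sum>k<N. \<alpha> * Qa k + (1 - \<alpha>) * Qb k)
       + h * (\<Sum>k\<in>{1..N-1}. Lam k \<bullet> ((1 / h\<^sup>2) *\<^sub>R (q (Suc k) - 2 *\<^sub>R q k + q (k - 1))
               - \<alpha> *\<^sub>R (\<gamma> *\<^sub>R A k + (1 - \<gamma>) *\<^sub>R A (k - 1))
               - (1 - \<alpha>) *\<^sub>R ((1 - \<gamma>) *\<^sub>R B k + \<gamma> *\<^sub>R B (k - 1)))))"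
    unfolding key ..
  also have "\<dots> = Jdir f \<rho> g \<phi> q0 qd0 T N \<alpha> \<gamma> q U1 U2 Lam \<mu> \<nu>"
    unfolding Jdir_def Let_def h_def[symmetric] Qa_def Qb_def A_def B_def by (simp add: add.assoc)
  finally show ?thesis .
qed


theorem mainTheorem8:
  fixes f :: "real^'n \<Rightarrow> real^'n \<Rightarrow> real^'n"
    and \<rho> :: "real^'n \<Rightarrow> real^'m^'n"
    and g :: "real^'n \<Rightarrow> real^'m^'m"
    and \<phi> :: "real^'n \<Rightarrow> real^'n \<Rightarrow> real"
    and q0 qd0 :: "real^'n"
    and T \<alpha> \<gamma> :: real and N :: nat
    and q lam Lam :: "nat \<Rightarrow> real^'n"
    and U1 U2 :: "nat \<Rightarrow> real^'m"
    and \<mu> \<nu> :: "real^'n"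
  assumes "T > 0" and "N \<ge> 1"
    and "0 \<le> \<alpha>" "\<alpha> \<le> 1" "0 \<le> \<gamma>" "\<gamma> \<le> 1"
    and "\<And>p. case_prod f differentiable (at p)"
    and "\<And>x. \<rho> differentiable (at x)"
    and "\<And>x. g differentiable (at x)"
    and "\<And>p. case_prod \<phi> differentiable (at p)"
    and "\<And>x. transpose (g x) = g x"
    and "\<And>x u. u \<noteq> 0 \<Longrightarrow> u \<bullet> (g x *v u) > 0"
    and "\<And>k. 1 \<le> k \<Longrightarrow> k \<le> N - 1 \<Longrightarrow> lam k = Lam k"
  shows "dir_stationary f \<rho> g \<phi> q0 qd0 T N \<alpha> \<gamma> q U1 U2 Lam \<mu> \<nu>
     \<longleftrightarrow> E_stationary f \<rho> g \<phi> q0 qd0 T N \<alpha> \<gamma> q lam U1 U2 \<mu> \<nu>"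
proof -
  have hne: "T / real N \<noteq> 0" using assms(1,2) by simp
  have EQ: "\<And>q' U1' U2' m n. JE f \<rho> g \<phi> q0 qd0 T N \<alpha> \<gamma> q' lam U1' U2' m n
       = Jdir f \<rho> g \<phi> q0 qd0 T N \<alpha> \<gamma> q' U1' U2' Lam m n"
    by (rule JE_Jdir[OF hne assms(2)]) (rule assms(13))
  have LAM: "stat_block (\<lambda>l'. JE f \<rho> g \<phi> q0 qd0 T N \<alpha> \<gamma> q l' U1 U2 \<mu> \<nu>) lam k
     \<longleftrightarrow> (k \<in> {1..N-1} \<longrightarrow> stat_block (\<lambda>L'. Jdir f \<rho> g \<phi> q0 qd0 T N \<alpha> \<gamma> q U1 U2 L' \<mu> \<nu>) Lam k)"
    for k
  proof (cases "k \<in> {1..N-1}")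
    case True
    have "JE f \<rho> g \<phi> q0 qd0 T N \<alpha> \<gamma> q (lam(k:=w)) U1 U2 \<mu> \<nu>
       = Jdir f \<rho> g \<phi> q0 qd0 T N \<alpha> \<gamma> q U1 U2 (Lam(k:=w)) \<mu> \<nu>" for w
      by (rule JE_Jdir[OF hne assms(2)]) (use assms(13) in auto)
    moreover have "lam k = Lam k" using True assms(13) by auto
    ultimately show ?thesis using True unfolding stat_block_def by simp
  next
    case False
    have "JE f \<rho> g \<phi> q0 qd0 T N \<alpha> \<gamma> q (lam(k:=w)) U1 U2 \<mu> \<nu>
       = Jdir f \<rho> g \<phi> q0 qd0 T N \<alpha> \<gamma> q U1 U2 Lam \<mu> \<nu>" for w
      by (rule JE_Jdir[OF hne assms(2)]) (use assms(13) False in auto)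
    then show ?thesis using False unfolding stat_block_def by auto
  qed
  have "(\<forall>k\<le>N. stat_block (\<lambda>l'. JE f \<rho> g \<phi> q0 qd0 T N \<alpha> \<gamma> q l' U1 U2 \<mu> \<nu>) lam k)
     \<longleftrightarrow> (\<forall>k\<in>{1..N-1}. stat_block (\<lambda>L'. Jdir f \<rho> g \<phi> q0 qd0 T N \<alpha> \<gamma> q U1 U2 L' \<mu> \<nu>) Lam k)"
    unfolding LAM by auto
  then show ?thesis unfolding dir_stationary_def E_stationary_def EQ by blast
qed

end
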